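(* Let $S$ be a set of primes and $(a_{S,n})_{n\ge1}$ a sequence. Then \[ a_{S,n}=\prod_{p\in S}\frac{1}{p-1}\left(\frac{p+1}{|n|_p}-2\right)\quad\text{for all } n\ge1 \] if and only if \[ \sum_{n\ge1}\frac{a_{S,n}}{n^s}=\zeta(s)\prod_{p\in S}\frac{p^s+1}{p^s-p} \] (as Dirichlet series, each factor $\frac{p^s+1}{p^s-p}=\frac{1+p^{-s}}{1-p^{1-s}}$ being expanded as a Dirichlet series in $p^{-s}$).
   Context: $|\cdot|_p$ is the $p$-adic absolute value, so $|n|_p^{-1}$ is the largest power of $p$ dividing $n$. $\zeta(s)=\sum_{n\ge1}n^{-s}$. *)

theory Defs
  imports "HOL-Computational_Algebra.Computational_Algebra"
begin

definition padic_abs :: "nat \<Rightarrow> nat \<Rightarrow> real" where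
  "padic_abs p n = inverse (real p ^ multiplicity p n)"

text \<open>Formal Dirichlet series with real coefficients are represented by their
coefficient sequences nat \<Rightarrow> real (only indices n \<ge> 1 are meaningful).
Product of Dirichlet series = Dirichlet convolution.\<close>
definition dconv :: "(nat \<Rightarrow> real) \<Rightarrow> (nat \<Rightarrow> real) \<Rightarrow> nat \<Rightarrow> real" where
  "dconv f g n = (\<Sum>d | d dvd n. f d * g (n div d))"

definition dunit :: "nat \<Rightarrow> real" where
  "dunit n = (if n = 1 then 1 else 0)"

definition dzeta :: "nat \<Rightarrow> real" where
  "dzeta n = 1"

definition dprod :: "(nat \<Rightarrow> nat \<Rightarrow> real) \<Rightarrow> nat set \<Rightarrow> nat \<Rightarrow> real" where
  "dprod F T = foldr (\<lambda>p acc. dconv (F p) acc) (sorted_list_of_set T) dunit"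

text \<open>Product over a possibly infinite set S of primes of Dirichlet series each of
the form 1 + (terms in p^(-s), p^(-2s), ...): the n-th coefficient is the n-th coefficient
of the finite partial product over the primes p \<in> S with p \<le> n (the factors with
p > n do not affect coefficients of index \<le> n).\<close>
definition dprod_inf :: "(nat \<Rightarrow> nat \<Rightarrow> real) \<Rightarrow> nat set \<Rightarrow> nat \<Rightarrow> real" where
  "dprod_inf F S n = dprod F {p \<in> S. p \<le> n} n"

text \<open>Dirichlet series 1 + p^(-s).\<close>
definition numer_ser :: "nat \<Rightarrow> nat \<Rightarrow> real" where
  "numer_ser p n = (if n = 1 then 1 else if n = p then 1 else 0)"

text \<open>Dirichlet series 1/(1 - p^(1-s)) = sum_k p^k (p^k)^(-s), i.e. the inverse of
1 - p * p^(-s).\<close>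
definition geom_ser :: "nat \<Rightarrow> nat \<Rightarrow> real" where
  "geom_ser p n = (if \<exists>k. n = p ^ k then real p ^ (THE k. n = p ^ k) else 0)"

text \<open>Dirichlet series (p^s+1)/(p^s-p) = (1+p^(-s))/(1-p^(1-s)).\<close>
definition factor_ser :: "nat \<Rightarrow> nat \<Rightarrow> real" where
  "factor_ser p = dconv (numer_ser p) (geom_ser p)"

end

theory Submission imports Defs begin

lemma dconv_zero: "dconv f g 0 = 0"
  by (simp add: dconv_def)

lemma dconv_comm: "dconv f g = dconv g f"
proof (rule ext)
  fix n :: nat
  show "dconv f g n = dconv g f n"
  proof (cases "n = 0")
    case True thus ?thesis by (simp add: dconv_zero)
  next
    case False
    show ?thesis unfolding dconv_def
      apply (rule sum.reindex_bij_witness[of _ "\<lambda>d. n div d" "\<lambda>d. n div d"])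
      using False by (auto simp: mult.commute dvd_div_eq_mult div_dvd_div elim!: dvdE)
  qed
qed

lemma dconv_assoc: "dconv f (dconv g h) = dconv (dconv f g) h"
proof (rule ext)
  fix n :: nat
  show "dconv f (dconv g h) n = dconv (dconv f g) h n"
  proof (cases "n = 0")
    case True thus ?thesis by (simp add: dconv_zero)
  next
    case False
    have fin: "\<And>m::nat. m > 0 \<Longrightarrow> finite {d. d dvd m}" by (simp add: finite_divisors_nat)
    have "dconv f (dconv g h) n = (\<Sum>d | d dvd n. \<Sum>e | e dvd n div d. f d * (g e * h (n div d div e)))"
      unfolding dconv_def by (simp add: sum_distrib_left)
    also have "\<dots> = (\<Sum>(d,e) \<in> Sigma {d. d dvd n} (\<lambda>d. {e. e dvd n div d}). f d * (g e * h (n div d div e)))"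
      apply (rule sum.Sigma) using False fin by auto
    also have "\<dots> = (\<Sum>(m,d) \<in> Sigma {m. m dvd n} (\<lambda>m. {d. d dvd m}). f d * g (m div d) * h (n div m))"
      apply (rule sum.reindex_bij_witness[of _ "\<lambda>(m,d). (d, m div d)" "\<lambda>(d,e). (d*e, d)"])
      using False apply (auto simp: div_mult2_eq elim!: dvdE)
      done
    also have "\<dots> = (\<Sum>m | m dvd n. \<Sum>d | d dvd m. f d * g (m div d) * h (n div m))"
      apply (rule sum.Sigma[symmetric]) using False fin by auto
    also have "\<dots> = dconv (dconv f g) h n"
      unfolding dconv_def by (simp add: sum_distrib_right)
    finally show ?thesis .
  qed
qed

lemma dconv_lcomm: "dconv a (dconv b c) = dconv b (dconv a c)"
  by (metis dconv_assoc dconv_comm)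

lemma foldr_insort_lc:
  assumes "\<And>a b c. g a (g b c) = g b (g a c)"
  shows "foldr g (insort x xs) z = g x (foldr g xs z)"
  by (induction xs) (auto simp: assms)

lemma dprod_insert:
  assumes "finite T" "q \<notin> T"
  shows "dprod F (insert q T) = dconv (F q) (dprod F T)"
proof -
  have "sorted_list_of_set (insert q T) = insort q (sorted_list_of_set T)"
    using assms by (simp add: sorted_list_of_set_insert_remove)
  thus ?thesis unfolding dprod_def
    by (simp add: foldr_insort_lc dconv_lcomm)
qed

lemma dconv_dunit: "n > 0 \<Longrightarrow> dconv dunit f n = f n"
proof -
  assume n: "n > 0"
  have "dconv dunit f n = (\<Sum>d | d dvd n. if d = 1 then f (n div d) else 0)"
    unfolding dconv_def dunit_def by (intro sum.cong) auto
  also have "\<dots> = f n" using n by (simp add: finite_divisors_nat)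
  finally show ?thesis .
qed

lemma dconv_ppow:
  fixes p n :: nat
  assumes p: "prime p" and n: "n > 0" and f: "\<And>m. (\<nexists>j. m = p ^ j) \<Longrightarrow> f m = 0"
  shows "dconv f g n = (\<Sum>j\<le>multiplicity p n. f (p ^ j) * g (n div p ^ j))"
proof -
  have p1: "p > 1" using p prime_gt_1_nat by blast
  have sub: "(\<lambda>j. p ^ j) ` {..multiplicity p n} \<subseteq> {d. d dvd n}"
    by (auto intro: multiplicity_dvd')
  have "dconv f g n = (\<Sum>d \<in> (\<lambda>j. p ^ j) ` {..multiplicity p n}. f d * g (n div d))"
    unfolding dconv_def
  proof (rule sum.mono_neutral_right)
    show "finite {d. d dvd n}" using n by (simp add: finite_divisors_nat)
    show "(\<lambda>j. p ^ j) ` {..multiplicity p n} \<subseteq> {d. d dvd n}" by (rule sub)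
    show "\<forall>i\<in>{d. d dvd n} - (\<lambda>j. p ^ j) ` {..multiplicity p n}. f i * g (n div i) = 0"
    proof
      fix i assume i: "i \<in> {d. d dvd n} - (\<lambda>j. p ^ j) ` {..multiplicity p n}"
      show "f i * g (n div i) = 0"
      proof (cases "\<exists>j. i = p ^ j")
        case True
        then obtain j where j: "i = p ^ j" by blast
        have "j \<le> multiplicity p n"
          using i j n p1 by (intro multiplicity_geI) auto
        thus ?thesis using i j by auto
      qed (simp add: f)
    qed
  qed
  also have "\<dots> = (\<Sum>j\<le>multiplicity p n. f (p ^ j) * g (n div p ^ j))"
    by (subst sum.reindex) (auto simp: inj_on_def intro: power_inject_exp[OF p1, THEN iffD1])
  finally show ?thesis .
qed

lemma numer_supp: "prime p \<Longrightarrow> (\<nexists>j. m = p ^ j) \<Longrightarrow> numer_ser p m = 0"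
  unfolding numer_ser_def by (metis power_0 power_one_right)

lemma geom_supp: "(\<nexists>j. m = p ^ j) \<Longrightarrow> geom_ser p m = 0"
  unfolding geom_ser_def by auto

lemma numer_pow: "prime p \<Longrightarrow> numer_ser p (p ^ j) = (if j \<le> 1 then 1 else 0)"
proof -
  assume p: "prime p"
  hence p1: "p > 1" using prime_gt_1_nat by blast
  have a: "p ^ j = 1 \<longleftrightarrow> j = 0" using p1 by simp
  have b: "p ^ j = p \<longleftrightarrow> j = 1" using p1 power_inject_exp[OF p1, of j 1] by simp
  show ?thesis unfolding numer_ser_def using a b by auto
qed

lemma geom_pow: "prime p \<Longrightarrow> geom_ser p (p ^ j) = real p ^ j"
proof -
  assume p: "prime p"
  hence p1: "p > 1" using prime_gt_1_nat by blast
  have "(THE k. p ^ j = p ^ k) = j"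
    by (rule the_equality) (auto simp: power_inject_exp[OF p1])
  thus ?thesis unfolding geom_ser_def by auto
qed

lemma mult_div_same:
  fixes p n :: nat
  assumes p: "prime p" and n: "n > 0" and j: "j \<le> multiplicity p n"
  shows "multiplicity p (n div p ^ j) = multiplicity p n - j"
proof -
  have d: "p ^ j dvd n" using j by (rule multiplicity_dvd')
  hence e: "n = p ^ j * (n div p ^ j)" by simp
  have m0: "n div p ^ j \<noteq> 0" using d n by (metis e mult_0_right neq0_conv)
  have "multiplicity p n = j + multiplicity p (n div p ^ j)"
    apply (subst e) using p m0 prime_gt_1_nat[OF p]
    by (subst prime_elem_multiplicity_mult_distrib) auto
  thus ?thesis by simp
qed

lemma mult_div_other:
  fixes p q n :: nat
  assumes p: "prime p" and q: "prime q" and pq: "q \<noteq> p" and n: "n > 0" and j: "j \<le> multiplicity p n"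
  shows "multiplicity q (n div p ^ j) = multiplicity q n"
proof -
  have d: "p ^ j dvd n" using j by (rule multiplicity_dvd')
  hence e: "n = p ^ j * (n div p ^ j)" by simp
  have m0: "n div p ^ j \<noteq> 0" using d n by (metis e mult_0_right neq0_conv)
  have "multiplicity q n = multiplicity q (p ^ j) + multiplicity q (n div p ^ j)"
    apply (subst e) using q m0 prime_gt_1_nat[OF p]
    by (subst prime_elem_multiplicity_mult_distrib) auto
  thus ?thesis using multiplicity_distinct_prime_power[OF q p pq] by simp
qed

lemma sum_le1: "(\<Sum>j\<le>(k::nat). (if j \<le> 1 then c j else (0::real))) = c 0 + (if k \<ge> 1 then c 1 else 0)"
  by (induction k) auto

definition G :: "nat \<Rightarrow> nat \<Rightarrow> real" where
  "G p k = (\<Sum>i\<le>k. real p ^ i) + (if k = 0 then 0 else (\<Sum>i\<le>k-1. real p ^ i))"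

lemma main:
  assumes "distinct xs" "\<forall>q\<in>set xs. prime q" "n > 0"
  shows "dconv dzeta (foldr (\<lambda>p acc. dconv (factor_ser p) acc) xs dunit) n
         = (\<Prod>q\<in>set xs. G q (multiplicity q n))"
  using assms
proof (induction xs arbitrary: n)
  case Nil
  have "dconv dzeta dunit n = dconv dunit dzeta n" by (simp only: dconv_comm)
  also have "\<dots> = dzeta n" using Nil by (intro dconv_dunit) simp
  also have "\<dots> = 1" by (simp add: dzeta_def)
  finally show ?case by simp
next
  case (Cons p xs)
  define A where "A = foldr (\<lambda>p acc. dconv (factor_ser p) acc) xs dunit"
  define Z where "Z = dconv dzeta A"
  define P where "P m = (\<Prod>q\<in>set xs. G q (multiplicity q m))" for m
  have p: "prime p" using Cons by simp
  have pn: "p \<notin> set xs" using Cons by simp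
  have Z: "\<And>m. m > 0 \<Longrightarrow> Z m = P m" unfolding Z_def A_def P_def using Cons by auto
  have Pinv: "\<And>m j. m > 0 \<Longrightarrow> j \<le> multiplicity p m \<Longrightarrow> P (m div p ^ j) = P m"
    unfolding P_def using Cons pn by (intro prod.cong refl) (subst mult_div_other[OF p], auto)
  have pos: "\<And>m j. m > 0 \<Longrightarrow> j \<le> multiplicity p m \<Longrightarrow> m div p ^ j > 0"
    by (metis multiplicity_dvd' dvd_div_eq_0_iff neq0_conv power_not_zero prime_gt_0_nat p)
  define W where "W = dconv (geom_ser p) Z"
  have W: "W m = (\<Sum>j\<le>multiplicity p m. real p ^ j) * P m" if m: "m > 0" for m
  proof -
    have "W m = (\<Sum>j\<le>multiplicity p m. geom_ser p (p ^ j) * Z (m div p ^ j))"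
      unfolding W_def using p m by (intro dconv_ppow) (auto intro: geom_supp)
    also have "\<dots> = (\<Sum>j\<le>multiplicity p m. real p ^ j * P m)"
      using m by (intro sum.cong refl) (simp add: geom_pow[OF p] Z pos Pinv)
    finally show ?thesis by (simp add: sum_distrib_right)
  qed
  have "dconv dzeta (foldr (\<lambda>p acc. dconv (factor_ser p) acc) (p # xs) dunit) n
        = dconv (numer_ser p) W n"
  proof -
    have "foldr (\<lambda>p acc. dconv (factor_ser p) acc) (p # xs) dunit = dconv (factor_ser p) A"
      by (simp add: A_def)
    hence "dconv dzeta (foldr (\<lambda>p acc. dconv (factor_ser p) acc) (p # xs) dunit)
        = dconv (factor_ser p) Z" by (simp only: Z_def dconv_lcomm[of dzeta])
    also have "\<dots> = dconv (numer_ser p) W"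
      by (simp only: factor_ser_def W_def dconv_assoc[symmetric])
    finally show ?thesis by simp
  qed
  also have "\<dots> = (\<Sum>j\<le>multiplicity p n. numer_ser p (p ^ j) * W (n div p ^ j))"
    using p Cons.prems by (intro dconv_ppow) (auto intro: numer_supp)
  also have "\<dots> = (\<Sum>j\<le>multiplicity p n. (if j \<le> 1 then W (n div p ^ j) else 0))"
    by (intro sum.cong refl) (simp add: numer_pow[OF p])
  also have "\<dots> = W n + (if multiplicity p n \<ge> 1 then W (n div p) else 0)"
    by (subst sum_le1) simp
  also have "\<dots> = G p (multiplicity p n) * P n"
  proof -
    have Wn: "W n = (\<Sum>j\<le>multiplicity p n. real p ^ j) * P n" using W Cons.prems by simp
    show ?thesis
    proof (cases "multiplicity p n \<ge> 1")
      case True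
      have "W (n div p ^ 1) = (\<Sum>j\<le>multiplicity p n - 1. real p ^ j) * P n"
        using W[OF pos[OF _ True]] Cons.prems Pinv[OF _ True] mult_div_same[OF p _ True] by simp
      thus ?thesis using True Wn by (simp add: G_def algebra_simps)
    next
      case False
      thus ?thesis using Wn by (simp add: G_def)
    qed
  qed
  also have "\<dots> = (\<Prod>q\<in>set (p # xs). G q (multiplicity q n))"
    using pn by (simp add: P_def)
  finally show ?case .
qed

lemma G_closed:
  assumes p: "p > (1::nat)"
  shows "G p k = (1 / (real p - 1)) * ((real p + 1) * real p ^ k - 2)"
proof -
  have p1: "real p - 1 \<noteq> 0" using p by simp
  have s: "\<And>n. (\<Sum>i\<le>n. real p ^ i) = (real p ^ Suc n - 1) / (real p - 1)"
  proof -
    fix n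
    have "(1 - real p) * (\<Sum>i\<le>n. real p ^ i) = 1 - real p ^ Suc n" by (rule sum_gp_basic)
    thus "(\<Sum>i\<le>n. real p ^ i) = (real p ^ Suc n - 1) / (real p - 1)"
      using p1 by (simp add: field_simps)
  qed
  show ?thesis
  proof (cases k)
    case 0 thus ?thesis using p1 by (simp add: G_def field_simps)
  next
    case (Suc k')
    have "G p k = (\<Sum>i\<le>Suc k'. real p ^ i) + (\<Sum>i\<le>k'. real p ^ i)"
      using Suc by (simp add: G_def)
    also have "\<dots> = (real p ^ Suc (Suc k') - 1) / (real p - 1) + (real p ^ Suc k' - 1) / (real p - 1)"
      by (simp only: s)
    also have "\<dots> = ((real p ^ Suc (Suc k') - 1) + (real p ^ Suc k' - 1)) / (real p - 1)"
      by (simp only: add_divide_distrib)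
    also have "\<dots> = ((real p + 1) * real p ^ k - 2) / (real p - 1)"
      using Suc by (intro arg_cong[where f="\<lambda>x. x / (real p - 1)"]) (simp add: algebra_simps)
    also have "\<dots> = (1 / (real p - 1)) * ((real p + 1) * real p ^ k - 2)" by simp
    finally show ?thesis .
  qed
qed

lemma conv_factor_nodvd:
  assumes q: "prime q" and m: "m > 0" and nd: "\<not> q dvd m"
  shows "dconv (factor_ser q) B m = B m"
proof -
  have v: "multiplicity q m = 0" using nd by (rule not_dvd_imp_multiplicity_0)
  have "dconv (factor_ser q) B m = dconv (numer_ser q) (dconv (geom_ser q) B) m"
    by (simp only: factor_ser_def dconv_assoc[symmetric])
  also have "\<dots> = numer_ser q 1 * dconv (geom_ser q) B m"
    using q m v by (subst dconv_ppow[of q]) (auto intro: numer_supp)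
  also have "\<dots> = numer_ser q 1 * (geom_ser q 1 * B m)"
    using q m v by (subst dconv_ppow[of q]) (auto intro: geom_supp)
  also have "\<dots> = B m"
    using numer_pow[OF q, of 0] geom_pow[OF q, of 0] by simp
  finally show ?thesis .
qed

lemma dprod_extend:
  assumes "finite D" "finite T" "D \<inter> T = {}" "\<forall>q\<in>D. prime q \<and> q > m" "m > 0"
  shows "dprod factor_ser (T \<union> D) m = dprod factor_ser T m"
  using assms
proof (induction D rule: finite_induct)
  case empty thus ?case by simp
next
  case (insert q D)
  have "dprod factor_ser (T \<union> insert q D) m = dprod factor_ser (insert q (T \<union> D)) m" by simp
  also have "\<dots> = dconv (factor_ser q) (dprod factor_ser (T \<union> D)) m"
    using insert by (subst dprod_insert) auto
  also have "\<dots> = dprod factor_ser (T \<union> D) m"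
    using insert by (intro conv_factor_nodvd) (auto dest: dvd_imp_le)
  also have "\<dots> = dprod factor_ser T m" using insert by auto
  finally show ?case .
qed

lemma coeff_formula:
  fixes S :: "nat set"
  assumes S: "\<forall>p\<in>S. prime p" and n: "n \<ge> 1"
  shows "dconv dzeta (dprod_inf factor_ser S) n = (\<Prod>p\<in>{p\<in>S. p dvd n}.
              (1 / (real p - 1)) * ((real p + 1) / padic_abs p n - 2))"
proof -
  define T where "T = {p\<in>S. p \<le> n}"
  have finT: "finite T" unfolding T_def by simp
  have "dconv dzeta (dprod_inf factor_ser S) n = dconv dzeta (dprod factor_ser T) n"
    unfolding dconv_def
  proof (intro sum.cong refl)
    fix d assume d: "d \<in> {d. d dvd n}"
    define m where "m = n div d"
    have m: "m > 0" using d n unfolding m_def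
      by (metis One_nat_def dvd_div_eq_0_iff mem_Collect_eq neq0_conv not_one_le_zero)
    have mn: "m \<le> n" unfolding m_def by simp
    define T0 where "T0 = {p\<in>S. p \<le> m}"
    have TT: "T = T0 \<union> (T - T0)" unfolding T_def T0_def using mn by auto
    have "dprod factor_ser (T0 \<union> (T - T0)) m = dprod factor_ser T0 m"
      by (rule dprod_extend) (use m S in \<open>auto simp: T_def T0_def\<close>)
    hence "dprod factor_ser T m = dprod factor_ser T0 m" using TT by simp
    thus "dzeta d * dprod_inf factor_ser S (n div d) = dzeta d * dprod factor_ser T (n div d)"
      unfolding dprod_inf_def m_def T0_def by simp
  qed
  also have "\<dots> = (\<Prod>q\<in>T. G q (multiplicity q n))"
    unfolding dprod_def using main[of "sorted_list_of_set T" n] finT S n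
    by (simp add: T_def)
  also have "\<dots> = (\<Prod>q\<in>{p\<in>S. p dvd n}. G q (multiplicity q n))"
  proof -
    have "(\<Prod>q\<in>{p\<in>S. p dvd n}. G q (multiplicity q n)) = (\<Prod>q\<in>T. G q (multiplicity q n))"
    proof (rule prod.mono_neutral_left)
      show "finite T" by (rule finT)
      show "{p \<in> S. p dvd n} \<subseteq> T" using n unfolding T_def by (auto dest: dvd_imp_le)
      show "\<forall>i\<in>T - {p \<in> S. p dvd n}. G i (multiplicity i n) = 1"
      proof
        fix i assume i: "i \<in> T - {p \<in> S. p dvd n}"
        hence "\<not> i dvd n" unfolding T_def by auto
        hence "multiplicity i n = 0" by (rule not_dvd_imp_multiplicity_0)
        thus "G i (multiplicity i n) = 1" by (simp add: G_def)
      qed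
    qed
    thus ?thesis by simp
  qed
  also have "\<dots> = (\<Prod>p\<in>{p\<in>S. p dvd n}. (1 / (real p - 1)) * ((real p + 1) / padic_abs p n - 2))"
  proof (intro prod.cong refl)
    fix p assume "p \<in> {p\<in>S. p dvd n}"
    hence p1: "p > 1" using S prime_gt_1_nat by auto
    show "G p (multiplicity p n) = (1 / (real p - 1)) * ((real p + 1) / padic_abs p n - 2)"
      by (simp add: G_closed[OF p1] padic_abs_def divide_inverse)
  qed
  finally show ?thesis .
qed

theorem lemma3p4:
  fixes S :: "nat set" and a :: "nat \<Rightarrow> real"
  assumes "\<forall>p\<in>S. prime p"
  shows "(\<forall>n\<ge>1. a n = (\<Prod>p\<in>{p\<in>S. p dvd n}.
              (1 / (real p - 1)) * ((real p + 1) / padic_abs p n - 2)))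
     \<longleftrightarrow> (\<forall>n\<ge>1. a n = dconv dzeta (dprod_inf factor_ser S) n)"
  using coeff_formula[OF assms] by simp

end
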